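(* There is an absolute constant $C$ such that the following holds. Let $0<\epsilon\le1$, let $X\subset\mathbb{R}^2$ be a finite set of points with pairwise distinct $x$-coordinates, and let $A\subseteq X$ be an $\epsilon$-approximation for $X$ with respect to the ranges given by parallelograms (intersections of two closed slabs, each slab being the region between two parallel lines), with $|A|\ge\max(2,1/\epsilon)$. Then for every real slope $s$, $|\rho_X(s)-\rho_A(s)|\le C\epsilon^{1/3}$.
   Context: For a finite set $Y\subset\mathbb{R}^2$ with $|Y|\ge2$ and pairwise distinct $x$-coordinates, and a real number $s$, $\rho_Y(s)$ denotes the number of unordered pairs $\{a,b\}\subseteq Y$, $a\ne b$, such that the line through $a$ and $b$ has slope less than $s$, divided by $\binom{|Y|}{2}$ (the normalized position of $s$ in the sorted sequence of pairwise slopes). For a finite set $X$ and a family $\mathcal{R}$ of subsets of the plane, $A\subseteq X$ is an $\epsilon$-approximation for $X$ with respect to $\mathcal{R}$ if $\left|\frac{|A\cap R|}{|A|}-\frac{|X\cap R|}{|X|}\right|\le\epsilon$ for every $R\in\mathcal{R}$. *)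

theory Defs
  imports Complex_Main
begin

type_synonym pt = "real \<times> real"

definition slope :: "pt \<Rightarrow> pt \<Rightarrow> real" where
  "slope a b = (snd b - snd a) / (fst b - fst a)"

definition distinct_x :: "pt set \<Rightarrow> bool" where
  "distinct_x Y \<longleftrightarrow> (\<forall>a\<in>Y. \<forall>b\<in>Y. a \<noteq> b \<longrightarrow> fst a \<noteq> fst b)"

definition rho :: "pt set \<Rightarrow> real \<Rightarrow> real" where
  "rho Y s = real (card {{a, b} | a b. a \<in> Y \<and> b \<in> Y \<and> a \<noteq> b \<and> slope a b < s})
              / real (card Y choose 2)"

definition slab :: "real \<Rightarrow> real \<Rightarrow> real \<Rightarrow> real \<Rightarrow> pt set" where
  "slab u1 u2 c1 c2 = {p. c1 \<le> u1 * fst p + u2 * snd p \<and> u1 * fst p + u2 * snd p \<le> c2}"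

definition parallelograms :: "pt set set" where
  "parallelograms = {slab u1 u2 c1 c2 \<inter> slab v1 v2 d1 d2 | u1 u2 c1 c2 v1 v2 d1 d2.
      (u1, u2) \<noteq> (0, 0) \<and> (v1, v2) \<noteq> (0, 0)}"

definition eps_approx :: "pt set \<Rightarrow> pt set \<Rightarrow> pt set set \<Rightarrow> real \<Rightarrow> bool" where
  "eps_approx A X R \<epsilon> \<longleftrightarrow> A \<subseteq> X \<and>
     (\<forall>r\<in>R. \<bar>real (card (A \<inter> r)) / real (card A) - real (card (X \<inter> r)) / real (card X)\<bar> \<le> \<epsilon>)"

end

theory Submission
  imports Defs
begin

definition Rel :: "real \<Rightarrow> pt \<Rightarrow> pt \<Rightarrow> bool" where
  "Rel s a b \<longleftrightarrow> fst a < fst b \<and> snd b - s * fst b < snd a - s * fst a"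

lemma thresh_gt:
  fixes S :: "real set"
  assumes "finite S"
  shows "\<exists>c. \<forall>v\<in>S. (\<alpha> < v \<longleftrightarrow> c \<le> v)"
proof (cases "{v\<in>S. \<alpha> < v} = {}")
  case True
  have "\<forall>v\<in>S. v \<le> Max (insert \<alpha> S)" using assms by simp
  then show ?thesis using True
    by (intro exI[of _ "Max (insert \<alpha> S) + 1"]) force
next
  case False
  have fin: "finite {v\<in>S. \<alpha> < v}" using assms by simp
  have "Min {v\<in>S. \<alpha> < v} \<in> {v\<in>S. \<alpha> < v}" using Min_in[OF fin False] .
  then show ?thesis using fin
    by (intro exI[of _ "Min {v\<in>S. \<alpha> < v}"]) (auto intro: Min_le)
qed

lemma thresh_lt:
  fixes S :: "real set"
  assumes "finite S"
  shows "\<exists>d. \<forall>v\<in>S. (v < \<beta> \<longleftrightarrow> v \<le> d)"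
proof -
  obtain c where c: "\<forall>v\<in>uminus ` S. (- \<beta> < v \<longleftrightarrow> c \<le> v)"
    using thresh_gt[of "uminus ` S" "-\<beta>"] assms by blast
  show ?thesis
    by (intro exI[of _ "-c"]) (use c in force)
qed

lemma bnd_above:
  fixes S :: "real set"
  assumes "finite S" shows "\<exists>M. \<forall>v\<in>S. v \<le> M"
  using assms by (intro exI[of _ "Max (insert 0 S)"]) simp

lemma bnd_below:
  fixes S :: "real set"
  assumes "finite S" shows "\<exists>M. \<forall>v\<in>S. M \<le> v"
  using assms by (intro exI[of _ "Min (insert 0 S)"]) simp

lemma para:
  assumes "finite X" "(u1, u2) \<noteq> (0::real, 0::real)" "(v1, v2) \<noteq> (0::real, 0::real)"
  shows "\<exists>r\<in>parallelograms. X \<inter> r =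
           {b\<in>X. \<alpha> < u1 * fst b + u2 * snd b \<and> v1 * fst b + v2 * snd b < \<beta>}"
proof -
  let ?f = "\<lambda>b::pt. u1 * fst b + u2 * snd b"
  let ?g = "\<lambda>b::pt. v1 * fst b + v2 * snd b"
  have f1: "finite (?f ` X)" "finite (?g ` X)" using assms(1) by auto
  obtain c where c: "\<forall>v\<in>?f ` X. (\<alpha> < v \<longleftrightarrow> c \<le> v)" using thresh_gt[OF f1(1)] by blast
  obtain d where d: "\<forall>v\<in>?g ` X. (v < \<beta> \<longleftrightarrow> v \<le> d)" using thresh_lt[OF f1(2)] by blast
  obtain M where M: "\<forall>v\<in>?f ` X. v \<le> M" using bnd_above[OF f1(1)] by blast
  obtain L where L: "\<forall>v\<in>?g ` X. L \<le> v" using bnd_below[OF f1(2)] by blast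
  let ?r = "slab u1 u2 c M \<inter> slab v1 v2 L d"
  have "?r \<in> parallelograms" unfolding parallelograms_def using assms(2,3) by blast
  moreover have "X \<inter> ?r = {b\<in>X. \<alpha> < ?f b \<and> ?g b < \<beta>}"
    using c d M L by (auto simp: slab_def)
  ultimately show ?thesis by blast
qed

lemma card_pairs1:
  assumes "finite Y" "finite Z"
  shows "card {(a, b). a \<in> Y \<and> b \<in> Z \<and> Rel s a b} = (\<Sum>a\<in>Y. card {b\<in>Z. Rel s a b})"
proof -
  have "{(a, b). a \<in> Y \<and> b \<in> Z \<and> Rel s a b} = (SIGMA a:Y. {b\<in>Z. Rel s a b})" by auto
  then show ?thesis using assms by (simp add: card_SigmaI)
qed

lemma card_pairs2:
  assumes "finite Y" "finite Z"
  shows "card {(a, b). a \<in> Y \<and> b \<in> Z \<and> Rel s a b} = (\<Sum>b\<in>Z. card {a\<in>Y. Rel s a b})"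
proof -
  let ?P = "{(a, b). a \<in> Y \<and> b \<in> Z \<and> Rel s a b}"
  have "prod.swap ` ?P = (SIGMA b:Z. {a\<in>Y. Rel s a b})" by auto
  moreover have "card (prod.swap ` ?P) = card ?P" by (rule card_image) simp
  ultimately show ?thesis using assms by (simp add: card_SigmaI)
qed

lemma real_choose2: "real (k choose 2) = real k * (real k - 1) / 2"
proof (cases k)
  case 0 then show ?thesis by simp
next
  case (Suc j)
  have "k choose 2 = k * (k - 1) div 2" by (rule choose_two)
  moreover have "even (k * (k - 1))" by (cases "even k") auto
  ultimately have "2 * (k choose 2) = k * (k - 1)" by simp
  then have "2 * real (k choose 2) = real k * real (k - 1)"
    by (metis of_nat_mult of_nat_numeral)
  then show ?thesis using Suc by simp
qed

lemma rho_eq: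
  assumes "finite Y" "distinct_x Y"
  shows "rho Y s = 2 * real (card {(a, b). a \<in> Y \<and> b \<in> Y \<and> Rel s a b})
                   / (real (card Y) * (real (card Y) - 1))"
proof -
  let ?P = "{(a, b). a \<in> Y \<and> b \<in> Y \<and> Rel s a b}"
  let ?U = "{{a, b} | a b. a \<in> Y \<and> b \<in> Y \<and> a \<noteq> b \<and> slope a b < s}"
  have sl: "slope a b < s \<longleftrightarrow> snd b - s * fst b < snd a - s * fst a" if "fst a < fst b" for a b
  proof -
    have "slope a b < s \<longleftrightarrow> snd b - snd a < s * (fst b - fst a)"
      unfolding slope_def using that by (simp add: divide_less_eq)
    then show ?thesis by (simp add: algebra_simps)
  qed
  have sym: "slope a b = slope b a" for a b
    unfolding slope_def by (metis minus_diff_eq minus_divide_divide)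
  have "?U = (\<lambda>(a, b). {a, b}) ` ?P"
  proof
    show "?U \<subseteq> (\<lambda>(a, b). {a, b}) ` ?P"
    proof
      fix e assume "e \<in> ?U"
      then obtain a b where e: "e = {a, b}" "a \<in> Y" "b \<in> Y" "a \<noteq> b" "slope a b < s" by blast
      then have "fst a \<noteq> fst b" using assms(2) unfolding distinct_x_def by blast
      then consider "fst a < fst b" | "fst b < fst a" by linarith
      then show "e \<in> (\<lambda>(a, b). {a, b}) ` ?P"
      proof cases
        case 1
        then have "Rel s a b" using sl e by (simp add: Rel_def)
        then show ?thesis using e by force
      next
        case 2
        then have "Rel s b a" using sl[of b a] e sym[of a b] by (simp add: Rel_def)
        then have "(b, a) \<in> ?P" using e by simp
        moreover have "e = {b, a}" using e by auto
        ultimately show ?thesis by force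
      qed
    qed
  next
    show "(\<lambda>(a, b). {a, b}) ` ?P \<subseteq> ?U"
    proof
      fix e assume "e \<in> (\<lambda>(a, b). {a, b}) ` ?P"
      then obtain a b where e: "e = {a, b}" "a \<in> Y" "b \<in> Y" "Rel s a b" by auto
      then have "a \<noteq> b" "slope a b < s" using sl by (auto simp: Rel_def)
      then show "e \<in> ?U" using e by blast
    qed
  qed
  moreover have "inj_on (\<lambda>(a, b). {a, b}) ?P"
  proof (rule inj_onI)
    fix p q assume p: "p \<in> ?P" and q: "q \<in> ?P" and eq: "(\<lambda>(a, b). {a, b}) p = (\<lambda>(a, b). {a, b}) q"
    obtain a b where ab: "p = (a, b)" "fst a < fst b" using p by (cases p) (auto simp: Rel_def)
    obtain c d where cd: "q = (c, d)" "fst c < fst d" using q by (cases q) (auto simp: Rel_def)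
    have "{a, b} = {c, d}" using eq ab cd by simp
    then have "(a = c \<and> b = d) \<or> (a = d \<and> b = c)" by (metis doubleton_eq_iff)
    then show "p = q" using ab cd by auto
  qed
  ultimately have "card ?U = card ?P" by (simp add: card_image)
  then show ?thesis unfolding rho_def real_choose2 by simp
qed

lemma card_P_le:
  assumes "finite Y"
  shows "card {(a, b). a \<in> Y \<and> b \<in> Y \<and> Rel s a b} \<le> card Y ^ 2"
proof -
  have "{(a, b). a \<in> Y \<and> b \<in> Y \<and> Rel s a b} \<subseteq> Y \<times> Y" by auto
  then have "card {(a, b). a \<in> Y \<and> b \<in> Y \<and> Rel s a b} \<le> card (Y \<times> Y)"
    using assms by (intro card_mono) auto
  then show ?thesis by (simp add: card_cartesian_product power2_eq_square)
qed

lemma arith_bound: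
  fixes k N :: real
  assumes "k \<ge> 2" "0 \<le> N" "N \<le> k^2"
  shows "\<bar>2 * N / (k * (k - 1)) - 2 * N / k^2\<bar> \<le> 4 / k"
proof -
  have "2 * N / (k * (k - 1)) - 2 * N / k^2 = 2 * N / (k^2 * (k - 1))"
    using assms by (simp add: field_simps power2_eq_square)
  moreover have "2 * N / (k^2 * (k - 1)) \<le> 2 * k^2 / (k^2 * (k - 1))"
    using assms by (intro divide_right_mono) auto
  moreover have "2 * k^2 / (k^2 * (k - 1)) = 2 / (k - 1)"
    using assms by simp
  moreover have "2 / (k - 1) \<le> 4 / k" using assms by (simp add: field_simps)
  moreover have "0 \<le> 2 * N / (k^2 * (k - 1))" using assms by simp
  ultimately show ?thesis by linarith
qed

lemma sum_approx:
  fixes f g :: "pt \<Rightarrow> nat"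
  assumes "finite Y" "\<And>a. a \<in> Y \<Longrightarrow> \<bar>real (f a) / m - real (g a) / n\<bar> \<le> e"
  shows "\<bar>real (\<Sum>a\<in>Y. f a) / m - real (\<Sum>a\<in>Y. g a) / n\<bar> \<le> real (card Y) * e"
proof -
  have "real (\<Sum>a\<in>Y. f a) / m - real (\<Sum>a\<in>Y. g a) / n = (\<Sum>a\<in>Y. real (f a) / m - real (g a) / n)"
    by (simp add: sum_subtractf sum_divide_distrib)
  also have "\<bar>\<dots>\<bar> \<le> (\<Sum>a\<in>Y. \<bar>real (f a) / m - real (g a) / n\<bar>)" by (rule sum_abs)
  also have "\<dots> \<le> (\<Sum>a\<in>Y. e)" using assms(2) by (intro sum_mono) auto
  finally show ?thesis by simp
qed

theorem mainTheorem6: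
  "\<exists>C::real. \<forall>(\<epsilon>::real) (X::pt set) (A::pt set) (s::real).
     0 < \<epsilon> \<and> \<epsilon> \<le> 1 \<and> finite X \<and> distinct_x X \<and>
     eps_approx A X parallelograms \<epsilon> \<and> real (card A) \<ge> max 2 (1 / \<epsilon>)
     \<longrightarrow> \<bar>rho X s - rho A s\<bar> \<le> C * \<epsilon> powr (1/3)"
proof (intro exI[of _ 12] allI impI, elim conjE)
  fix \<epsilon> :: real and X A :: "pt set" and s :: real
  assume e0: "0 < \<epsilon>" and e1: "\<epsilon> \<le> 1" and finX: "finite X" and dX: "distinct_x X"
    and ea: "eps_approx A X parallelograms \<epsilon>" and cA: "real (card A) \<ge> max 2 (1 / \<epsilon>)"
  have AX: "A \<subseteq> X" using ea unfolding eps_approx_def by blast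
  have ea2: "\<And>r. r \<in> parallelograms \<Longrightarrow>
     \<bar>real (card (A \<inter> r)) / real (card A) - real (card (X \<inter> r)) / real (card X)\<bar> \<le> \<epsilon>"
    using ea unfolding eps_approx_def by blast
  have finA: "finite A" using AX finX finite_subset by blast
  have dA: "distinct_x A" using dX AX unfolding distinct_x_def by blast
  define m where "m = real (card A)"
  define n where "n = real (card X)"
  have m2: "m \<ge> 2" and me: "1 / \<epsilon> \<le> m" using cA m_def by auto
  have mn: "m \<le> n" unfolding m_def n_def using card_mono[OF finX AX] by simp
  have im: "1 / m \<le> \<epsilon>" using me e0 m2 by (simp add: field_simps)
  have inn: "1 / n \<le> \<epsilon>"
  proof -
    have "\<epsilon> * m \<le> \<epsilon> * n" using mn e0 by simp
    moreover have "1 \<le> \<epsilon> * m" using me e0 by (simp add: field_simps)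
    ultimately have "1 \<le> \<epsilon> * n" by linarith
    then show ?thesis using e0 m2 mn by (simp add: field_simps)
  qed
  have q1: "\<bar>real (card {b\<in>A. Rel s a b}) / m - real (card {b\<in>X. Rel s a b}) / n\<bar> \<le> \<epsilon>" for a
  proof -
    obtain r where r: "r \<in> parallelograms" and
      rX: "X \<inter> r = {b\<in>X. fst a < 1 * fst b + 0 * snd b \<and> (-s) * fst b + 1 * snd b < snd a - s * fst a}"
      using para[OF finX, of 1 0 "-s" 1 "fst a" "snd a - s * fst a"] by auto
    have X1: "{b\<in>X. Rel s a b} = X \<inter> r" unfolding rX by (auto simp: Rel_def algebra_simps)
    have A1: "{b\<in>A. Rel s a b} = A \<inter> r" using X1 AX by blast
    show ?thesis using ea2[OF r] X1 A1 m_def n_def by simp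
  qed
  have q2: "\<bar>real (card {a\<in>A. Rel s a b}) / m - real (card {a\<in>X. Rel s a b}) / n\<bar> \<le> \<epsilon>" for b
  proof -
    obtain r where r: "r \<in> parallelograms" and
      rX: "X \<inter> r = {a\<in>X. - fst b < (-1) * fst a + 0 * snd a \<and> s * fst a + (-1) * snd a < s * fst b - snd b}"
      using para[OF finX, of "-1" 0 s "-1" "- fst b" "s * fst b - snd b"] by auto
    have X1: "{a\<in>X. Rel s a b} = X \<inter> r" unfolding rX by (auto simp: Rel_def algebra_simps)
    have A1: "{a\<in>A. Rel s a b} = A \<inter> r" using X1 AX by blast
    show ?thesis using ea2[OF r] X1 A1 m_def n_def by simp
  qed
  define NA where "NA = card {(a, b). a \<in> A \<and> b \<in> A \<and> Rel s a b}"
  define NAX where "NAX = card {(a, b). a \<in> A \<and> b \<in> X \<and> Rel s a b}"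
  define NX where "NX = card {(a, b). a \<in> X \<and> b \<in> X \<and> Rel s a b}"
  have k1: "\<bar>real NA / m - real NAX / n\<bar> \<le> m * \<epsilon>"
    unfolding NA_def NAX_def card_pairs1[OF finA finA] card_pairs1[OF finA finX]
    using sum_approx[OF finA q1] m_def by simp
  have k2: "\<bar>real NAX / m - real NX / n\<bar> \<le> n * \<epsilon>"
    unfolding NX_def NAX_def card_pairs2[OF finX finX] card_pairs2[OF finA finX]
    using sum_approx[OF finX q2] n_def by simp
  have mp: "m > 0" "n > 0" using m2 mn by auto
  have l1: "\<bar>real NA / m^2 - real NAX / (m * n)\<bar> \<le> \<epsilon>"
  proof -
    have "real NA / m^2 - real NAX / (m * n) = (real NA / m - real NAX / n) / m"
      using mp by (simp add: field_simps power2_eq_square)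
    then show ?thesis using k1 mp by (simp add: abs_divide divide_le_eq mult.commute)
  qed
  have l2: "\<bar>real NAX / (m * n) - real NX / n^2\<bar> \<le> \<epsilon>"
  proof -
    have "real NAX / (m * n) - real NX / n^2 = (real NAX / m - real NX / n) / n"
      using mp by (simp add: field_simps power2_eq_square)
    then show ?thesis using k2 mp by (simp add: abs_divide divide_le_eq mult.commute)
  qed
  have rA: "rho A s = 2 * real NA / (m * (m - 1))" unfolding NA_def m_def by (rule rho_eq[OF finA dA])
  have rX: "rho X s = 2 * real NX / (n * (n - 1))" unfolding NX_def n_def by (rule rho_eq[OF finX dX])
  have NAle: "real NA \<le> m^2"
  proof -
    have "NA \<le> card A ^ 2" unfolding NA_def by (rule card_P_le[OF finA])
    then have "real NA \<le> real (card A ^ 2)" by (simp only: of_nat_le_iff)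
    then show ?thesis unfolding m_def by simp
  qed
  have NXle: "real NX \<le> n^2"
  proof -
    have "NX \<le> card X ^ 2" unfolding NX_def by (rule card_P_le[OF finX])
    then have "real NX \<le> real (card X ^ 2)" by (simp only: of_nat_le_iff)
    then show ?thesis unfolding n_def by simp
  qed
  have bA: "\<bar>2 * real NA / (m * (m - 1)) - 2 * real NA / m^2\<bar> \<le> 4 / m"
    by (rule arith_bound[OF m2 _ NAle]) simp
  have n2: "n \<ge> 2" using m2 mn by linarith
  have bX: "\<bar>2 * real NX / (n * (n - 1)) - 2 * real NX / n^2\<bar> \<le> 4 / n"
    by (rule arith_bound[OF n2 _ NXle]) simp
  have "4 / m \<le> 4 * \<epsilon>" "4 / n \<le> 4 * \<epsilon>" using im inn by auto
  then have "\<bar>rho X s - rho A s\<bar> \<le> 12 * \<epsilon>"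
    unfolding rA rX using bA bX l1 l2 by (simp add: abs_le_iff)
  also have "\<epsilon> \<le> \<epsilon> powr (1/3)"
    using powr_mono'[of "1/3" 1 \<epsilon>] e0 e1 by simp
  then have "12 * \<epsilon> \<le> 12 * \<epsilon> powr (1/3)" by simp
  finally show "\<bar>rho X s - rho A s\<bar> \<le> 12 * \<epsilon> powr (1/3)" .
qed

end
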